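(* Let $K$ be a finite commutative ring, $G$ a group, $\alpha:G\times G\to U(K)$ a 2-cocycle, and $R=K^\alpha G$ the twisted group ring. Let $T_1,T_2\subseteq R$ be subsets such that any two elements of $T_1$ commute, and let $(-)^*:T_2\to R$ be a map satisfying $x\,y^*=y\,x^*$ for all $x,y\in T_2$. Let $L^1_1,\dots,L^1_{n_1}\in T_1$, $L^2_1,\dots,L^2_{n_2}\in T_2$, $h\in R$, $a,c\in T_1$ and $b,d\in T_2$. Suppose that integers $z_{ij}$ ($1\le i\le n_1$, $1\le j\le n_2$) satisfy \[ ahb=\sum_{i=1}^{n_1}\sum_{j=1}^{n_2} z_{ij}\,L^1_i\,h\,L^2_j. \] Then \[ \sum_{i=1}^{n_1}\sum_{j=1}^{n_2} z_{ij}\,L^1_i\,(chd)\,(L^2_j)^* \;=\; c\,a\,h\,b\,d^*. \]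
   Context: $U(K)$ is the group of units of $K$. A 2-cocycle is a map $\alpha:G\times G\to U(K)$ with $\alpha(g,1)=\alpha(1,g)=1$ and $\alpha(g,h)\alpha(gh,k)=\alpha(g,hk)\alpha(h,k)$ for all $g,h,k\in G$. The twisted group ring $K^\alpha G$ is the free $K$-module with basis $\{\overline g:g\in G\}$ and multiplication $(a\overline g)(b\overline h)=ab\,\alpha(g,h)\,\overline{gh}$ extended bilinearly. Integer coefficients $z_{ij}$ act by repeated addition (e.g. coefficients in the prime field $\mathbb{Z}_p$ when $R$ has characteristic $p$). This is used in the key exchange where Alice publishes $ahb$, Bob publishes $chd$, and the shared key is $a(chd)b^*=c(ahb)d^*$. *)

theory Defs
  imports "HOL-Algebra.Ring"
begin

definition two_cocycle :: "('g, 'b) monoid_scheme \<Rightarrow> ('g \<Rightarrow> 'g \<Rightarrow> 'k::comm_ring_1) \<Rightarrow> bool" where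
  "two_cocycle G \<alpha> \<longleftrightarrow>
     (\<forall>g\<in>carrier G. \<forall>h\<in>carrier G. \<alpha> g h dvd 1) \<and>
     (\<forall>g\<in>carrier G. \<alpha> g \<one>\<^bsub>G\<^esub> = 1 \<and> \<alpha> \<one>\<^bsub>G\<^esub> g = 1) \<and>
     (\<forall>g\<in>carrier G. \<forall>h\<in>carrier G. \<forall>k\<in>carrier G.
        \<alpha> g h * \<alpha> (g \<otimes>\<^bsub>G\<^esub> h) k = \<alpha> g (h \<otimes>\<^bsub>G\<^esub> k) * \<alpha> h k)"

text \<open>The twisted group ring K^alpha G: elements are finitely supported functions
  carrier G -> K (the coefficient of the basis element g-bar is f g), with
  (a g-bar)(b h-bar) = a b alpha(g,h) (gh)-bar extended bilinearly.\<close>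

definition tw_carrier :: "('g, 'b) monoid_scheme \<Rightarrow> ('g \<Rightarrow> 'k::comm_ring_1) set" where
  "tw_carrier G = {f. (\<forall>x. x \<notin> carrier G \<longrightarrow> f x = 0) \<and> finite {x. f x \<noteq> 0}}"

definition tw_mult :: "('g, 'b) monoid_scheme \<Rightarrow> ('g \<Rightarrow> 'g \<Rightarrow> 'k::comm_ring_1)
    \<Rightarrow> ('g \<Rightarrow> 'k) \<Rightarrow> ('g \<Rightarrow> 'k) \<Rightarrow> ('g \<Rightarrow> 'k)" where
  "tw_mult G \<alpha> f h = (\<lambda>x. \<Sum>(g, k) \<in> {(g, k). f g \<noteq> 0 \<and> h k \<noteq> 0 \<and> g \<otimes>\<^bsub>G\<^esub> k = x}.
       f g * h k * \<alpha> g k)"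

definition twisted_group_ring :: "('g, 'b) monoid_scheme \<Rightarrow> ('g \<Rightarrow> 'g \<Rightarrow> 'k::comm_ring_1)
    \<Rightarrow> ('g \<Rightarrow> 'k) ring" where
  "twisted_group_ring G \<alpha> =
     \<lparr> carrier = tw_carrier G,
       mult = tw_mult G \<alpha>,
       one = (\<lambda>x. if x = \<one>\<^bsub>G\<^esub> then 1 else 0),
       zero = (\<lambda>x. 0),
       add = (\<lambda>f h x. f x + h x) \<rparr>"

end

theory Submission imports Defs begin

lemma tw_mult_eq:
  assumes "finite A" "finite B" "{g. f g \<noteq> 0} \<subseteq> A" "{k. h k \<noteq> 0} \<subseteq> B"
  shows "tw_mult G \<alpha> f h x = (\<Sum>g\<in>A. \<Sum>k\<in>B. if g \<otimes>\<^bsub>G\<^esub> k = x then f g * h k * \<alpha> g k else 0)"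
proof -
  have "(\<Sum>g\<in>A. \<Sum>k\<in>B. if g \<otimes>\<^bsub>G\<^esub> k = x then f g * h k * \<alpha> g k else 0)
     = (\<Sum>(g,k)\<in>A \<times> B. if g \<otimes>\<^bsub>G\<^esub> k = x then f g * h k * \<alpha> g k else 0)"
    by (rule sum.cartesian_product)
  also have "\<dots> = tw_mult G \<alpha> f h x"
    unfolding tw_mult_def
    by (rule sum.mono_neutral_cong_left[symmetric]) (use assms in \<open>auto split: if_splits\<close>)
  finally show ?thesis by simp
qed

lemma collapse:
  assumes "finite U" "finite A" "finite B" "\<And>g k. g \<in> A \<Longrightarrow> k \<in> B \<Longrightarrow> m g k \<in> U"
  shows "(\<Sum>u\<in>U. \<Sum>g\<in>A. \<Sum>k\<in>B. if m g k = u then F g k u else (0::'a::comm_monoid_add))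
       = (\<Sum>g\<in>A. \<Sum>k\<in>B. F g k (m g k))"
proof -
  have "(\<Sum>u\<in>U. \<Sum>g\<in>A. \<Sum>k\<in>B. if m g k = u then F g k u else 0)
     = (\<Sum>g\<in>A. \<Sum>k\<in>B. \<Sum>u\<in>U. if m g k = u then F g k u else 0)"
    by (subst sum.swap, rule sum.cong, simp, rule sum.swap)
  also have "\<dots> = (\<Sum>g\<in>A. \<Sum>k\<in>B. F g k (m g k))"
    using assms by (simp add: sum.delta)
  finally show ?thesis .
qed


lemma tw_carrierD:
  assumes "f \<in> tw_carrier G"
  shows "finite {g. f g \<noteq> 0}" "{g. f g \<noteq> 0} \<subseteq> carrier G"
  using assms unfolding tw_carrier_def by auto

lemma tw_mult_supp:
  shows "{x. tw_mult G \<alpha> f h x \<noteq> 0} \<subseteq> (\<lambda>(g,k). g \<otimes>\<^bsub>G\<^esub> k) ` ({g. f g \<noteq> 0} \<times> {k. h k \<noteq> 0})"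
proof
  fix x assume "x \<in> {x. tw_mult G \<alpha> f h x \<noteq> 0}"
  then have ne: "tw_mult G \<alpha> f h x \<noteq> 0" by simp
  define S where "S = {(g, k). f g \<noteq> 0 \<and> h k \<noteq> 0 \<and> g \<otimes>\<^bsub>G\<^esub> k = x}"
  have eq: "tw_mult G \<alpha> f h x = (\<Sum>(g, k)\<in>S. f g * h k * \<alpha> g k)"
    unfolding tw_mult_def S_def by (rule refl)
  have "S \<noteq> {}"
  proof
    assume "S = {}"
    then have "tw_mult G \<alpha> f h x = 0" unfolding eq by (simp only: sum.empty)
    with ne show False by contradiction
  qed
  then obtain g k where "(g, k) \<in> S" by auto
  then show "x \<in> (\<lambda>(g,k). g \<otimes>\<^bsub>G\<^esub> k) ` ({g. f g \<noteq> 0} \<times> {k. h k \<noteq> 0})"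
    unfolding S_def by force
qed

lemma tw_mult_closed:
  assumes G: "group G" and f: "f \<in> tw_carrier G" and h: "h \<in> tw_carrier G"
  shows "tw_mult G \<alpha> f h \<in> tw_carrier G"
proof -
  let ?I = "(\<lambda>(g,k). g \<otimes>\<^bsub>G\<^esub> k) ` ({g. f g \<noteq> 0} \<times> {k. h k \<noteq> 0})"
  have sub: "{x. tw_mult G \<alpha> f h x \<noteq> 0} \<subseteq> ?I" by (rule tw_mult_supp)
  have "?I \<subseteq> carrier G"
  proof
    fix y assume "y \<in> ?I"
    then obtain g k where y: "y = g \<otimes>\<^bsub>G\<^esub> k" and "g \<in> {g. f g \<noteq> 0}" "k \<in> {k. h k \<noteq> 0}" by auto
    then have "g \<in> carrier G" "k \<in> carrier G" using tw_carrierD(2)[OF f] tw_carrierD(2)[OF h] by auto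
    then show "y \<in> carrier G" using y G by (simp add: group.is_monoid monoid.m_closed)
  qed
  moreover have "finite ?I"
    using tw_carrierD(1)[OF f] tw_carrierD(1)[OF h] by simp
  ultimately have "finite {x. tw_mult G \<alpha> f h x \<noteq> 0}" "\<forall>x. x \<notin> carrier G \<longrightarrow> tw_mult G \<alpha> f h x = 0"
    using sub by (blast intro: finite_subset)+
  then show ?thesis unfolding tw_carrier_def by simp
qed

lemma pull1:
  fixes P :: "'x \<Rightarrow> 'y \<Rightarrow> 'a::comm_ring_1"
  shows "(\<Sum>m\<in>C. if c m then (\<Sum>g\<in>A. \<Sum>k\<in>B. if d g k then P g k else 0) * Q m else 0)
   = (\<Sum>g\<in>A. \<Sum>k\<in>B. if d g k then (\<Sum>m\<in>C. if c m then P g k * Q m else 0) else 0)"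
proof -
  have "(\<Sum>m\<in>C. if c m then (\<Sum>g\<in>A. \<Sum>k\<in>B. if d g k then P g k else 0) * Q m else 0)
     = (\<Sum>m\<in>C. \<Sum>g\<in>A. \<Sum>k\<in>B. if d g k then (if c m then P g k * Q m else 0) else 0)"
  proof (rule sum.cong)
    fix m assume "m \<in> C"
    show "(if c m then (\<Sum>g\<in>A. \<Sum>k\<in>B. if d g k then P g k else 0) * Q m else 0)
      = (\<Sum>g\<in>A. \<Sum>k\<in>B. if d g k then (if c m then P g k * Q m else 0) else 0)"
      by (cases "c m") (auto simp: sum_distrib_right intro!: sum.cong sum.neutral)
  qed simp
  also have "\<dots> = (\<Sum>g\<in>A. \<Sum>m\<in>C. \<Sum>k\<in>B. if d g k then (if c m then P g k * Q m else 0) else 0)"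
    by (rule sum.swap)
  also have "\<dots> = (\<Sum>g\<in>A. \<Sum>k\<in>B. \<Sum>m\<in>C. if d g k then (if c m then P g k * Q m else 0) else 0)"
    by (rule sum.cong, simp, rule sum.swap)
  also have "\<dots> = (\<Sum>g\<in>A. \<Sum>k\<in>B. if d g k then (\<Sum>m\<in>C. if c m then P g k * Q m else 0) else 0)"
    by (intro sum.cong refl) auto
  finally show ?thesis .
qed

lemma pull2:
  fixes P :: "'x \<Rightarrow> 'y \<Rightarrow> 'a::comm_ring_1"
  shows "(\<Sum>v\<in>V. if c v then F * (\<Sum>k\<in>B. \<Sum>m\<in>C. if d k m v then P k m else 0) * Q v else 0)
   = (\<Sum>v\<in>V. \<Sum>k\<in>B. \<Sum>m\<in>C. if d k m v then (if c v then F * P k m * Q v else 0) else 0)"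
proof (rule sum.cong)
  fix v assume "v \<in> V"
  show "(if c v then F * (\<Sum>k\<in>B. \<Sum>m\<in>C. if d k m v then P k m else 0) * Q v else 0)
    = (\<Sum>k\<in>B. \<Sum>m\<in>C. if d k m v then (if c v then F * P k m * Q v else 0) else 0)"
  proof (cases "c v")
    case True
    have "F * (\<Sum>k\<in>B. \<Sum>m\<in>C. if d k m v then P k m else 0) * Q v
       = (\<Sum>k\<in>B. \<Sum>m\<in>C. F * (if d k m v then P k m else 0) * Q v)"
      by (simp add: sum_distrib_left sum_distrib_right)
    then show ?thesis using True by (auto intro!: sum.cong)
  next
    case False then show ?thesis by (auto intro!: sum.neutral)
  qed
qed simp


lemma tw_assoc:
  assumes G: "group G" and coc: "two_cocycle G \<alpha>"
    and f: "f \<in> tw_carrier G" and h: "h \<in> tw_carrier G" and l: "l \<in> tw_carrier G"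
  shows "tw_mult G \<alpha> (tw_mult G \<alpha> f h) l = tw_mult G \<alpha> f (tw_mult G \<alpha> h l)"
proof (rule ext)
  fix x
  define A where "A = {g. f g \<noteq> 0}"
  define B where "B = {g. h g \<noteq> 0}"
  define C where "C = {g. l g \<noteq> 0}"
  define U where "U = (\<lambda>(g,k). g \<otimes>\<^bsub>G\<^esub> k) ` (A \<times> B)"
  define V where "V = (\<lambda>(g,k). g \<otimes>\<^bsub>G\<^esub> k) ` (B \<times> C)"
  have fA: "finite A" and fB: "finite B" and fC: "finite C"
    and cA: "A \<subseteq> carrier G" and cB: "B \<subseteq> carrier G" and cC: "C \<subseteq> carrier G"
    using tw_carrierD[OF f] tw_carrierD[OF h] tw_carrierD[OF l] A_def B_def C_def by auto
  have fU: "finite U" and fV: "finite V" using fA fB fC U_def V_def by auto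
  have sU: "{x. tw_mult G \<alpha> f h x \<noteq> 0} \<subseteq> U" using tw_mult_supp A_def B_def U_def by simp
  have sV: "{x. tw_mult G \<alpha> h l x \<noteq> 0} \<subseteq> V" using tw_mult_supp B_def C_def V_def by simp
  have "tw_mult G \<alpha> (tw_mult G \<alpha> f h) l x
      = (\<Sum>u\<in>U. \<Sum>m\<in>C. if u \<otimes>\<^bsub>G\<^esub> m = x then tw_mult G \<alpha> f h u * l m * \<alpha> u m else 0)"
    by (rule tw_mult_eq) (use fU fC sU C_def in auto)
  also have "\<dots> = (\<Sum>u\<in>U. \<Sum>m\<in>C. if u \<otimes>\<^bsub>G\<^esub> m = x then
      (\<Sum>g\<in>A. \<Sum>k\<in>B. if g \<otimes>\<^bsub>G\<^esub> k = u then f g * h k * \<alpha> g k else 0) * (l m * \<alpha> u m) else 0)"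
  proof -
    have tm: "\<And>u. tw_mult G \<alpha> f h u = (\<Sum>g\<in>A. \<Sum>k\<in>B. if g \<otimes>\<^bsub>G\<^esub> k = u then f g * h k * \<alpha> g k else 0)"
      by (rule tw_mult_eq) (use fA fB A_def B_def in auto)
    show ?thesis by (simp only: tm mult.assoc)
  qed
  also have "\<dots> = (\<Sum>u\<in>U. \<Sum>g\<in>A. \<Sum>k\<in>B. if g \<otimes>\<^bsub>G\<^esub> k = u then
      (\<Sum>m\<in>C. if u \<otimes>\<^bsub>G\<^esub> m = x then (f g * h k * \<alpha> g k) * (l m * \<alpha> u m) else 0) else 0)"
    by (rule sum.cong[OF refl], rule pull1)
  also have "\<dots> = (\<Sum>g\<in>A. \<Sum>k\<in>B. \<Sum>m\<in>C. if (g \<otimes>\<^bsub>G\<^esub> k) \<otimes>\<^bsub>G\<^esub> m = x then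
      (f g * h k * \<alpha> g k) * (l m * \<alpha> (g \<otimes>\<^bsub>G\<^esub> k) m) else 0)"
    by (rule collapse[where F = "\<lambda>g k u. \<Sum>m\<in>C. if u \<otimes>\<^bsub>G\<^esub> m = x then (f g * h k * \<alpha> g k) * (l m * \<alpha> u m) else 0"])
       (use fU fA fB U_def in auto)
  also have "\<dots> = (\<Sum>g\<in>A. \<Sum>k\<in>B. \<Sum>m\<in>C. if g \<otimes>\<^bsub>G\<^esub> (k \<otimes>\<^bsub>G\<^esub> m) = x then
      f g * (h k * l m * \<alpha> k m) * \<alpha> g (k \<otimes>\<^bsub>G\<^esub> m) else 0)"
  proof (intro sum.cong refl)
    fix g k m assume g: "g \<in> A" and k: "k \<in> B" and m: "m \<in> C"
    then have gc: "g \<in> carrier G" and kc: "k \<in> carrier G" and mc: "m \<in> carrier G" using cA cB cC by auto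
    have e1: "(g \<otimes>\<^bsub>G\<^esub> k) \<otimes>\<^bsub>G\<^esub> m = g \<otimes>\<^bsub>G\<^esub> (k \<otimes>\<^bsub>G\<^esub> m)"
      using G gc kc mc by (simp add: group.is_monoid monoid.m_assoc)
    have e2: "\<alpha> g k * \<alpha> (g \<otimes>\<^bsub>G\<^esub> k) m = \<alpha> g (k \<otimes>\<^bsub>G\<^esub> m) * \<alpha> k m"
      using coc gc kc mc unfolding two_cocycle_def by blast
    have "(f g * h k * \<alpha> g k) * (l m * \<alpha> (g \<otimes>\<^bsub>G\<^esub> k) m) = f g * h k * l m * (\<alpha> g k * \<alpha> (g \<otimes>\<^bsub>G\<^esub> k) m)"
      by (simp add: ac_simps)
    also have "\<dots> = f g * (h k * l m * \<alpha> k m) * \<alpha> g (k \<otimes>\<^bsub>G\<^esub> m)" by (simp add: e2 ac_simps)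
    finally show "(if (g \<otimes>\<^bsub>G\<^esub> k) \<otimes>\<^bsub>G\<^esub> m = x then
      (f g * h k * \<alpha> g k) * (l m * \<alpha> (g \<otimes>\<^bsub>G\<^esub> k) m) else 0) = (if g \<otimes>\<^bsub>G\<^esub> (k \<otimes>\<^bsub>G\<^esub> m) = x then
      f g * (h k * l m * \<alpha> k m) * \<alpha> g (k \<otimes>\<^bsub>G\<^esub> m) else 0)" using e1 by simp
  qed
  also have "\<dots> = (\<Sum>g\<in>A. \<Sum>v\<in>V. \<Sum>k\<in>B. \<Sum>m\<in>C. if k \<otimes>\<^bsub>G\<^esub> m = v then
      (if g \<otimes>\<^bsub>G\<^esub> v = x then f g * (h k * l m * \<alpha> k m) * \<alpha> g v else 0) else 0)"
    by (rule sum.cong[OF refl], rule collapse[symmetric]) (use fV fB fC V_def in auto)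
  also have "\<dots> = (\<Sum>g\<in>A. \<Sum>v\<in>V. if g \<otimes>\<^bsub>G\<^esub> v = x then
      f g * (\<Sum>k\<in>B. \<Sum>m\<in>C. if k \<otimes>\<^bsub>G\<^esub> m = v then h k * l m * \<alpha> k m else 0) * \<alpha> g v else 0)"
    by (rule sum.cong[OF refl], rule pull2[symmetric])
  also have "\<dots> = (\<Sum>g\<in>A. \<Sum>v\<in>V. if g \<otimes>\<^bsub>G\<^esub> v = x then f g * tw_mult G \<alpha> h l v * \<alpha> g v else 0)"
  proof -
    have tm: "\<And>v. tw_mult G \<alpha> h l v = (\<Sum>k\<in>B. \<Sum>m\<in>C. if k \<otimes>\<^bsub>G\<^esub> m = v then h k * l m * \<alpha> k m else 0)"
      by (rule tw_mult_eq) (use fB fC B_def C_def in auto)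
    show ?thesis by (simp only: tm)
  qed
  also have "\<dots> = tw_mult G \<alpha> f (tw_mult G \<alpha> h l) x"
    by (rule tw_mult_eq[symmetric]) (use fA fV sV A_def in auto)
  finally show "tw_mult G \<alpha> (tw_mult G \<alpha> f h) l x = tw_mult G \<alpha> f (tw_mult G \<alpha> h l) x" .
qed


lemma tw_ldistr:
  assumes f: "f \<in> tw_carrier G" and h: "h \<in> tw_carrier G" and l: "l \<in> tw_carrier G"
  shows "tw_mult G \<alpha> (\<lambda>x. f x + h x) l = (\<lambda>x. tw_mult G \<alpha> f l x + tw_mult G \<alpha> h l x)"
proof (rule ext)
  fix x
  define A where "A = {g. f g \<noteq> 0} \<union> {g. h g \<noteq> 0}"
  define C where "C = {g. l g \<noteq> 0}"
  have fA: "finite A" and fC: "finite C" using tw_carrierD[OF f] tw_carrierD[OF h] tw_carrierD[OF l] A_def C_def by auto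
  have "tw_mult G \<alpha> (\<lambda>x. f x + h x) l x = (\<Sum>g\<in>A. \<Sum>k\<in>C. if g \<otimes>\<^bsub>G\<^esub> k = x then (f g + h g) * l k * \<alpha> g k else 0)"
    by (rule tw_mult_eq) (use fA fC A_def C_def in auto)
  also have "\<dots> = (\<Sum>g\<in>A. \<Sum>k\<in>C. if g \<otimes>\<^bsub>G\<^esub> k = x then f g * l k * \<alpha> g k else 0)
     + (\<Sum>g\<in>A. \<Sum>k\<in>C. if g \<otimes>\<^bsub>G\<^esub> k = x then h g * l k * \<alpha> g k else 0)"
    unfolding sum.distrib[symmetric] by (intro sum.cong refl) (simp add: algebra_simps)
  also have "\<dots> = tw_mult G \<alpha> f l x + tw_mult G \<alpha> h l x"
    by (subst (1 2) tw_mult_eq[of A C]) (use fA fC A_def C_def in auto)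
  finally show "tw_mult G \<alpha> (\<lambda>x. f x + h x) l x = tw_mult G \<alpha> f l x + tw_mult G \<alpha> h l x" .
qed

lemma tw_rdistr:
  assumes f: "f \<in> tw_carrier G" and h: "h \<in> tw_carrier G" and l: "l \<in> tw_carrier G"
  shows "tw_mult G \<alpha> l (\<lambda>x. f x + h x) = (\<lambda>x. tw_mult G \<alpha> l f x + tw_mult G \<alpha> l h x)"
proof (rule ext)
  fix x
  define A where "A = {g. f g \<noteq> 0} \<union> {g. h g \<noteq> 0}"
  define C where "C = {g. l g \<noteq> 0}"
  have fA: "finite A" and fC: "finite C" using tw_carrierD[OF f] tw_carrierD[OF h] tw_carrierD[OF l] A_def C_def by auto
  have "tw_mult G \<alpha> l (\<lambda>x. f x + h x) x = (\<Sum>g\<in>C. \<Sum>k\<in>A. if g \<otimes>\<^bsub>G\<^esub> k = x then l g * (f k + h k) * \<alpha> g k else 0)"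
    by (rule tw_mult_eq) (use fA fC A_def C_def in auto)
  also have "\<dots> = (\<Sum>g\<in>C. \<Sum>k\<in>A. if g \<otimes>\<^bsub>G\<^esub> k = x then l g * f k * \<alpha> g k else 0)
     + (\<Sum>g\<in>C. \<Sum>k\<in>A. if g \<otimes>\<^bsub>G\<^esub> k = x then l g * h k * \<alpha> g k else 0)"
    unfolding sum.distrib[symmetric] by (intro sum.cong refl) (simp add: algebra_simps)
  also have "\<dots> = tw_mult G \<alpha> l f x + tw_mult G \<alpha> l h x"
    by (subst (1 2) tw_mult_eq[of C A]) (use fA fC A_def C_def in auto)
  finally show "tw_mult G \<alpha> l (\<lambda>x. f x + h x) x = tw_mult G \<alpha> l f x + tw_mult G \<alpha> l h x" .
qed

lemma tw_l_one:
  assumes G: "group G" and coc: "two_cocycle G \<alpha>" and f: "f \<in> tw_carrier G"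
  shows "tw_mult G \<alpha> (\<lambda>x. if x = \<one>\<^bsub>G\<^esub> then 1 else 0) f = f"
proof (rule ext)
  fix x
  define B where "B = {g. f g \<noteq> 0}"
  have fB: "finite B" and cB: "B \<subseteq> carrier G" using tw_carrierD[OF f] B_def by auto
  have "tw_mult G \<alpha> (\<lambda>x. if x = \<one>\<^bsub>G\<^esub> then 1 else 0) f x
     = (\<Sum>g\<in>{\<one>\<^bsub>G\<^esub>}. \<Sum>k\<in>B. if g \<otimes>\<^bsub>G\<^esub> k = x then (if g = \<one>\<^bsub>G\<^esub> then 1 else 0) * f k * \<alpha> g k else 0)"
    by (rule tw_mult_eq) (use fB B_def in auto)
  also have "\<dots> = (\<Sum>k\<in>B. if k = x then f k else 0)"
  proof -
    have "\<And>k. k \<in> B \<Longrightarrow> \<one>\<^bsub>G\<^esub> \<otimes>\<^bsub>G\<^esub> k = k \<and> \<alpha> \<one>\<^bsub>G\<^esub> k = 1"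
      using cB G coc unfolding two_cocycle_def by (auto simp: group.is_monoid monoid.l_one)
    then show ?thesis by (auto intro!: sum.cong)
  qed
  also have "\<dots> = f x" using fB B_def by (simp add: sum.delta')
  finally show "tw_mult G \<alpha> (\<lambda>x. if x = \<one>\<^bsub>G\<^esub> then 1 else 0) f x = f x" .
qed

lemma tw_r_one:
  assumes G: "group G" and coc: "two_cocycle G \<alpha>" and f: "f \<in> tw_carrier G"
  shows "tw_mult G \<alpha> f (\<lambda>x. if x = \<one>\<^bsub>G\<^esub> then 1 else 0) = f"
proof (rule ext)
  fix x
  define B where "B = {g. f g \<noteq> 0}"
  have fB: "finite B" and cB: "B \<subseteq> carrier G" using tw_carrierD[OF f] B_def by auto
  have "tw_mult G \<alpha> f (\<lambda>x. if x = \<one>\<^bsub>G\<^esub> then 1 else 0) x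
     = (\<Sum>k\<in>B. \<Sum>g\<in>{\<one>\<^bsub>G\<^esub>}. if k \<otimes>\<^bsub>G\<^esub> g = x then f k * (if g = \<one>\<^bsub>G\<^esub> then 1 else 0) * \<alpha> k g else 0)"
    by (rule tw_mult_eq) (use fB B_def in auto)
  also have "\<dots> = (\<Sum>k\<in>B. if k = x then f k else 0)"
  proof -
    have "\<And>k. k \<in> B \<Longrightarrow> k \<otimes>\<^bsub>G\<^esub> \<one>\<^bsub>G\<^esub> = k \<and> \<alpha> k \<one>\<^bsub>G\<^esub> = 1"
      using cB G coc unfolding two_cocycle_def by (auto simp: group.is_monoid monoid.r_one)
    then show ?thesis by (auto intro!: sum.cong)
  qed
  also have "\<dots> = f x" using fB B_def by (simp add: sum.delta')
  finally show "tw_mult G \<alpha> f (\<lambda>x. if x = \<one>\<^bsub>G\<^esub> then 1 else 0) x = f x" .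
qed

lemma tw_add_closed:
  assumes f: "f \<in> tw_carrier G" and h: "h \<in> tw_carrier G"
  shows "(\<lambda>x. f x + h x) \<in> tw_carrier G"
proof -
  have "{x. f x + h x \<noteq> 0} \<subseteq> {x. f x \<noteq> 0} \<union> {x. h x \<noteq> 0}" by auto
  then show ?thesis using f h unfolding tw_carrier_def by (auto intro: finite_subset)
qed

lemma tw_ring:
  fixes \<alpha> :: "'g \<Rightarrow> 'g \<Rightarrow> 'k::comm_ring_1" and G :: "('g, 'b) monoid_scheme"
  assumes G: "group G" and coc: "two_cocycle G \<alpha>"
  shows "ring (twisted_group_ring G \<alpha>)"
proof (rule ringI)
  show "abelian_group (twisted_group_ring G \<alpha>)"
  proof (rule abelian_groupI, goal_cases)
    case (1 x y) then show ?case by (simp add: twisted_group_ring_def tw_add_closed)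
  next
    case 2 then show ?case by (simp add: twisted_group_ring_def tw_carrier_def)
  next
    case (3 x y z) then show ?case by (simp add: twisted_group_ring_def add.assoc)
  next
    case (4 x y) then show ?case by (simp add: twisted_group_ring_def add.commute)
  next
    case (5 x) then show ?case by (simp add: twisted_group_ring_def)
  next
    case (6 x)
    then have "(\<lambda>g. - x g) \<in> tw_carrier G" by (simp add: twisted_group_ring_def tw_carrier_def)
    then show ?case using 6 by (auto simp: twisted_group_ring_def intro!: bexI[of _ "\<lambda>g. - x g"])
  qed
  show "monoid (twisted_group_ring G \<alpha>)"
  proof (rule monoidI, goal_cases)
    case (1 x y) then show ?case by (simp add: twisted_group_ring_def tw_mult_closed[OF G])
  next
    case 2
    have "{x. (if x = \<one>\<^bsub>G\<^esub> then 1 else 0) \<noteq> (0::'k)} \<subseteq> {\<one>\<^bsub>G\<^esub>}" by auto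
    then show ?case using G
      by (auto simp: twisted_group_ring_def tw_carrier_def group.is_monoid monoid.one_closed intro: finite_subset)
  next
    case (3 x y z) then show ?case by (simp add: twisted_group_ring_def tw_assoc[OF G coc])
  next
    case (4 x) then show ?case by (simp add: twisted_group_ring_def tw_l_one[OF G coc])
  next
    case (5 x) then show ?case by (simp add: twisted_group_ring_def tw_r_one[OF G coc])
  qed
  show "\<And>x y z. x \<in> carrier (twisted_group_ring G \<alpha>) \<Longrightarrow> y \<in> carrier (twisted_group_ring G \<alpha>) \<Longrightarrow>
     z \<in> carrier (twisted_group_ring G \<alpha>) \<Longrightarrow>
     (x \<oplus>\<^bsub>twisted_group_ring G \<alpha>\<^esub> y) \<otimes>\<^bsub>twisted_group_ring G \<alpha>\<^esub> z =
     x \<otimes>\<^bsub>twisted_group_ring G \<alpha>\<^esub> z \<oplus>\<^bsub>twisted_group_ring G \<alpha>\<^esub> y \<otimes>\<^bsub>twisted_group_ring G \<alpha>\<^esub> z"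
    by (simp add: twisted_group_ring_def tw_ldistr)
  show "\<And>x y z. x \<in> carrier (twisted_group_ring G \<alpha>) \<Longrightarrow> y \<in> carrier (twisted_group_ring G \<alpha>) \<Longrightarrow>
     z \<in> carrier (twisted_group_ring G \<alpha>) \<Longrightarrow>
     z \<otimes>\<^bsub>twisted_group_ring G \<alpha>\<^esub> (x \<oplus>\<^bsub>twisted_group_ring G \<alpha>\<^esub> y) =
     z \<otimes>\<^bsub>twisted_group_ring G \<alpha>\<^esub> x \<oplus>\<^bsub>twisted_group_ring G \<alpha>\<^esub> z \<otimes>\<^bsub>twisted_group_ring G \<alpha>\<^esub> y"
    by (simp add: twisted_group_ring_def tw_rdistr)
qed

theorem mainTheorem4:
  fixes G :: "('g, 'b) monoid_scheme"
    and \<alpha> :: "'g \<Rightarrow> 'g \<Rightarrow> 'k::{comm_ring_1, finite}"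
    and R :: "('g \<Rightarrow> 'k) ring"
    and T1 T2 :: "('g \<Rightarrow> 'k) set"
    and star :: "('g \<Rightarrow> 'k) \<Rightarrow> ('g \<Rightarrow> 'k)"
    and n1 n2 :: nat
    and L1 L2 :: "nat \<Rightarrow> ('g \<Rightarrow> 'k)"
    and h a b c d :: "'g \<Rightarrow> 'k"
    and z :: "nat \<Rightarrow> nat \<Rightarrow> int"
  assumes G: "group G"
    and cocycle: "two_cocycle G \<alpha>"
    and R_def: "R = twisted_group_ring G \<alpha>"
    and T1: "T1 \<subseteq> carrier R"
    and T2: "T2 \<subseteq> carrier R"
    and T1_comm: "\<forall>x\<in>T1. \<forall>y\<in>T1. x \<otimes>\<^bsub>R\<^esub> y = y \<otimes>\<^bsub>R\<^esub> x"
    and star_into: "\<forall>x\<in>T2. star x \<in> carrier R"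
    and star_prop: "\<forall>x\<in>T2. \<forall>y\<in>T2. x \<otimes>\<^bsub>R\<^esub> star y = y \<otimes>\<^bsub>R\<^esub> star x"
    and L1: "\<forall>i\<in>{1..n1}. L1 i \<in> T1"
    and L2: "\<forall>j\<in>{1..n2}. L2 j \<in> T2"
    and h: "h \<in> carrier R"
    and a: "a \<in> T1" and c: "c \<in> T1"
    and b: "b \<in> T2" and d: "d \<in> T2"
    and hyp: "a \<otimes>\<^bsub>R\<^esub> h \<otimes>\<^bsub>R\<^esub> b =
      (\<Oplus>\<^bsub>R\<^esub>i\<in>{1..n1}. \<Oplus>\<^bsub>R\<^esub>j\<in>{1..n2}.
         add_pow R (z i j) (L1 i \<otimes>\<^bsub>R\<^esub> h \<otimes>\<^bsub>R\<^esub> L2 j))"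
  shows "(\<Oplus>\<^bsub>R\<^esub>i\<in>{1..n1}. \<Oplus>\<^bsub>R\<^esub>j\<in>{1..n2}.
           add_pow R (z i j) (L1 i \<otimes>\<^bsub>R\<^esub> (c \<otimes>\<^bsub>R\<^esub> h \<otimes>\<^bsub>R\<^esub> d) \<otimes>\<^bsub>R\<^esub> star (L2 j)))
       = c \<otimes>\<^bsub>R\<^esub> a \<otimes>\<^bsub>R\<^esub> h \<otimes>\<^bsub>R\<^esub> b \<otimes>\<^bsub>R\<^esub> star d"
proof -
  interpret ring R using tw_ring[OF G cocycle] R_def by simp
  have cT1: "\<And>x. x \<in> T1 \<Longrightarrow> x \<in> carrier R" and cT2: "\<And>x. x \<in> T2 \<Longrightarrow> x \<in> carrier R"
    using T1 T2 by auto
  have aC: "a \<in> carrier R" and cC: "c \<in> carrier R" and bC: "b \<in> carrier R" and dC: "d \<in> carrier R"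
    and sdC: "star d \<in> carrier R"
    using a b c d cT1 cT2 star_into by auto
  have L1C: "\<And>i. i \<in> {1..n1} \<Longrightarrow> L1 i \<in> carrier R" using L1 cT1 by auto
  have L2C: "\<And>j. j \<in> {1..n2} \<Longrightarrow> L2 j \<in> carrier R" using L2 cT2 by auto
  have sL2C: "\<And>j. j \<in> {1..n2} \<Longrightarrow> star (L2 j) \<in> carrier R" using L2 star_into by auto
  have termeq: "add_pow R (z i j) (L1 i \<otimes>\<^bsub>R\<^esub> (c \<otimes>\<^bsub>R\<^esub> h \<otimes>\<^bsub>R\<^esub> d) \<otimes>\<^bsub>R\<^esub> star (L2 j))
     = c \<otimes>\<^bsub>R\<^esub> add_pow R (z i j) (L1 i \<otimes>\<^bsub>R\<^esub> h \<otimes>\<^bsub>R\<^esub> L2 j) \<otimes>\<^bsub>R\<^esub> star d"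
    if i: "i \<in> {1..n1}" and j: "j \<in> {1..n2}" for i j
  proof -
    have li: "L1 i \<in> carrier R" and lj: "L2 j \<in> carrier R" and slj: "star (L2 j) \<in> carrier R"
      using L1C[OF i] L2C[OF j] sL2C[OF j] .
    have e1: "L1 i \<otimes>\<^bsub>R\<^esub> c = c \<otimes>\<^bsub>R\<^esub> L1 i" using T1_comm L1 i c by blast
    have e2: "d \<otimes>\<^bsub>R\<^esub> star (L2 j) = L2 j \<otimes>\<^bsub>R\<^esub> star d" using star_prop L2 j d by blast
    have "L1 i \<otimes>\<^bsub>R\<^esub> (c \<otimes>\<^bsub>R\<^esub> h \<otimes>\<^bsub>R\<^esub> d) \<otimes>\<^bsub>R\<^esub> star (L2 j)
        = (L1 i \<otimes>\<^bsub>R\<^esub> c) \<otimes>\<^bsub>R\<^esub> h \<otimes>\<^bsub>R\<^esub> (d \<otimes>\<^bsub>R\<^esub> star (L2 j))"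
      using li slj cC dC h by (simp add: m_assoc)
    also have "\<dots> = (c \<otimes>\<^bsub>R\<^esub> L1 i) \<otimes>\<^bsub>R\<^esub> h \<otimes>\<^bsub>R\<^esub> (L2 j \<otimes>\<^bsub>R\<^esub> star d)" by (simp only: e1 e2)
    also have "\<dots> = c \<otimes>\<^bsub>R\<^esub> (L1 i \<otimes>\<^bsub>R\<^esub> h \<otimes>\<^bsub>R\<^esub> L2 j) \<otimes>\<^bsub>R\<^esub> star d"
      using li lj cC sdC h by (simp add: m_assoc)
    finally have eq: "L1 i \<otimes>\<^bsub>R\<^esub> (c \<otimes>\<^bsub>R\<^esub> h \<otimes>\<^bsub>R\<^esub> d) \<otimes>\<^bsub>R\<^esub> star (L2 j)
        = c \<otimes>\<^bsub>R\<^esub> (L1 i \<otimes>\<^bsub>R\<^esub> h \<otimes>\<^bsub>R\<^esub> L2 j) \<otimes>\<^bsub>R\<^esub> star d" .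
    have X: "L1 i \<otimes>\<^bsub>R\<^esub> h \<otimes>\<^bsub>R\<^esub> L2 j \<in> carrier R" using li lj h by simp
    show ?thesis unfolding eq
      using add_pow_rdistr_int[OF cC X, of "z i j"] add_pow_ldistr_int[OF _ sdC, of "c \<otimes>\<^bsub>R\<^esub> (L1 i \<otimes>\<^bsub>R\<^esub> h \<otimes>\<^bsub>R\<^esub> L2 j)" "z i j"]
        add_pow_ldistr_int[OF _ sdC, of "L1 i \<otimes>\<^bsub>R\<^esub> h \<otimes>\<^bsub>R\<^esub> L2 j" "z i j"] cC X
      by simp
  qed
  have Yc: "\<And>i j. i \<in> {1..n1} \<Longrightarrow> j \<in> {1..n2} \<Longrightarrow> add_pow R (z i j) (L1 i \<otimes>\<^bsub>R\<^esub> h \<otimes>\<^bsub>R\<^esub> L2 j) \<in> carrier R"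
    using L1C L2C h by simp
  have "(\<Oplus>\<^bsub>R\<^esub>i\<in>{1..n1}. \<Oplus>\<^bsub>R\<^esub>j\<in>{1..n2}.
           add_pow R (z i j) (L1 i \<otimes>\<^bsub>R\<^esub> (c \<otimes>\<^bsub>R\<^esub> h \<otimes>\<^bsub>R\<^esub> d) \<otimes>\<^bsub>R\<^esub> star (L2 j)))
     = (\<Oplus>\<^bsub>R\<^esub>i\<in>{1..n1}. \<Oplus>\<^bsub>R\<^esub>j\<in>{1..n2}.
           c \<otimes>\<^bsub>R\<^esub> add_pow R (z i j) (L1 i \<otimes>\<^bsub>R\<^esub> h \<otimes>\<^bsub>R\<^esub> L2 j) \<otimes>\<^bsub>R\<^esub> star d)"
  proof (rule finsum_cong'[OF refl])
    fix i assume i: "i \<in> {1..n1}"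
    show "(\<Oplus>\<^bsub>R\<^esub>j\<in>{1..n2}. add_pow R (z i j) (L1 i \<otimes>\<^bsub>R\<^esub> (c \<otimes>\<^bsub>R\<^esub> h \<otimes>\<^bsub>R\<^esub> d) \<otimes>\<^bsub>R\<^esub> star (L2 j)))
       = (\<Oplus>\<^bsub>R\<^esub>j\<in>{1..n2}. c \<otimes>\<^bsub>R\<^esub> add_pow R (z i j) (L1 i \<otimes>\<^bsub>R\<^esub> h \<otimes>\<^bsub>R\<^esub> L2 j) \<otimes>\<^bsub>R\<^esub> star d)"
      by (rule finsum_cong'[OF refl]) (use i in \<open>auto simp: termeq Pi_def Yc cC sdC\<close>)
  next
    show "(\<lambda>i. \<Oplus>\<^bsub>R\<^esub>j\<in>{1..n2}. c \<otimes>\<^bsub>R\<^esub> add_pow R (z i j) (L1 i \<otimes>\<^bsub>R\<^esub> h \<otimes>\<^bsub>R\<^esub> L2 j) \<otimes>\<^bsub>R\<^esub> star d) \<in> {1..n1} \<rightarrow> carrier R"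
      by (auto simp: Pi_def Yc cC sdC intro!: finsum_closed)
  qed
  also have "\<dots> = (\<Oplus>\<^bsub>R\<^esub>i\<in>{1..n1}. c \<otimes>\<^bsub>R\<^esub> (\<Oplus>\<^bsub>R\<^esub>j\<in>{1..n2}.
           add_pow R (z i j) (L1 i \<otimes>\<^bsub>R\<^esub> h \<otimes>\<^bsub>R\<^esub> L2 j)) \<otimes>\<^bsub>R\<^esub> star d)"
    by (intro finsum_cong refl)
       (auto simp: Pi_def Yc cC sdC finsum_ldistr finsum_rdistr)
  also have "\<dots> = c \<otimes>\<^bsub>R\<^esub> (\<Oplus>\<^bsub>R\<^esub>i\<in>{1..n1}. \<Oplus>\<^bsub>R\<^esub>j\<in>{1..n2}.
           add_pow R (z i j) (L1 i \<otimes>\<^bsub>R\<^esub> h \<otimes>\<^bsub>R\<^esub> L2 j)) \<otimes>\<^bsub>R\<^esub> star d"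
    by (auto simp: Pi_def Yc cC sdC finsum_ldistr finsum_rdistr)
  also have "\<dots> = c \<otimes>\<^bsub>R\<^esub> a \<otimes>\<^bsub>R\<^esub> h \<otimes>\<^bsub>R\<^esub> b \<otimes>\<^bsub>R\<^esub> star d"
    unfolding hyp[symmetric] using aC bC cC h sdC by (simp add: m_assoc)
  finally show ?thesis .
qed

end
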